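(* Let $\kappa$ be a regular uncountable cardinal and $I$ an ideal on $\kappa$. Then $I$ is subpleasant if and only if $I$ is subnormal.
   Context: An ideal on $\kappa$ is a family of subsets of $\kappa$ closed under subsets and finite unions, which is $<\kappa$-complete and contains all singletons. It is proper if $\kappa\notin I$. For $A\subseteq\kappa$ and $X_\alpha\subseteq\kappa$, $\bigtriangledown_{\alpha\in A}X_\alpha=\{\xi<\kappa:\exists\alpha<\xi\,(\alpha\in A\wedge \xi\in X_\alpha)\}$. $I$ is normal if $X_\alpha\in I$ for all $\alpha<\kappa$ implies $\bigtriangledown_{\alpha<\kappa}X_\alpha\in I$. $I$ is pleasant if whenever $A\in I$ and $X_\alpha\in I$ for all $\alpha$, then $\bigtriangledown_{\alpha\in A}X_\alpha\in I$. $I$ is subnormal if it is contained in a proper normal ideal on $\kappa$, and subpleasant if it is contained in a proper pleasant ideal on $\kappa$. *)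

theory Defs
  imports Main "HOL-Library.Countable_Set"
begin

unbundle cardinal_syntax

text \<open>The cardinal kappa is represented by a cardinal well-order r (an initial ordinal);
  its elements are Field r and the strict order is (a,b) in r with a distinct from b.\<close>

definition strict_less :: "'a rel \<Rightarrow> 'a \<Rightarrow> 'a \<Rightarrow> bool" where
  "strict_less r a b \<longleftrightarrow> (a, b) \<in> r \<and> a \<noteq> b"

definition is_ideal :: "'a rel \<Rightarrow> 'a set set \<Rightarrow> bool" where
  "is_ideal r I \<longleftrightarrow>
     I \<subseteq> Pow (Field r)
   \<and> (\<forall>X\<in>I. \<forall>Y. Y \<subseteq> X \<longrightarrow> Y \<in> I)
   \<and> (\<forall>X\<in>I. \<forall>Y\<in>I. X \<union> Y \<in> I)
   \<and> (\<forall>\<X>. \<X> \<subseteq> I \<and> |\<X>| <o r \<longrightarrow> \<Union>\<X> \<in> I)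
   \<and> (\<forall>\<alpha>\<in>Field r. {\<alpha>} \<in> I)"

definition proper_ideal :: "'a rel \<Rightarrow> 'a set set \<Rightarrow> bool" where
  "proper_ideal r I \<longleftrightarrow> Field r \<notin> I"

definition diag_union :: "'a rel \<Rightarrow> 'a set \<Rightarrow> ('a \<Rightarrow> 'a set) \<Rightarrow> 'a set" where
  "diag_union r A X = {\<xi> \<in> Field r. \<exists>\<alpha>. strict_less r \<alpha> \<xi> \<and> \<alpha> \<in> A \<and> \<xi> \<in> X \<alpha>}"

definition normal_ideal :: "'a rel \<Rightarrow> 'a set set \<Rightarrow> bool" where
  "normal_ideal r I \<longleftrightarrow>
     (\<forall>X. (\<forall>\<alpha>\<in>Field r. X \<alpha> \<in> I) \<longrightarrow> diag_union r (Field r) X \<in> I)"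

definition pleasant_ideal :: "'a rel \<Rightarrow> 'a set set \<Rightarrow> bool" where
  "pleasant_ideal r I \<longleftrightarrow>
     (\<forall>A X. A \<in> I \<and> (\<forall>\<alpha>\<in>Field r. X \<alpha> \<in> I) \<longrightarrow> diag_union r A X \<in> I)"

definition subnormal :: "'a rel \<Rightarrow> 'a set set \<Rightarrow> bool" where
  "subnormal r I \<longleftrightarrow>
     (\<exists>J. is_ideal r J \<and> proper_ideal r J \<and> normal_ideal r J \<and> I \<subseteq> J)"

definition subpleasant :: "'a rel \<Rightarrow> 'a set set \<Rightarrow> bool" where
  "subpleasant r I \<longleftrightarrow>
     (\<exists>J. is_ideal r J \<and> proper_ideal r J \<and> pleasant_ideal r J \<and> I \<subseteq> J)"

end

theory Submission
  imports Defs
begin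

lemma choice2: "\<forall>Y\<in>XX. \<exists>X Z. P X Z Y \<Longrightarrow> \<exists>Xf Zf. \<forall>Y\<in>XX. P (Xf Y) (Zf Y) Y"
  apply (drule bchoice) apply (erule exE) apply (drule bchoice) by blast

lemma ideal_D1: "is_ideal r J \<Longrightarrow> J \<subseteq> Pow (Field r)"
  unfolding is_ideal_def by (elim conjE) assumption

lemma ideal_D2: "is_ideal r J \<Longrightarrow> \<forall>X\<in>J. \<forall>Y. Y \<subseteq> X \<longrightarrow> Y \<in> J"
  unfolding is_ideal_def by (elim conjE) assumption

lemma ideal_D3: "is_ideal r J \<Longrightarrow> \<forall>X\<in>J. \<forall>Y\<in>J. X \<union> Y \<in> J"
  unfolding is_ideal_def by (elim conjE) assumption

lemma ideal_D4: "is_ideal r J \<Longrightarrow> \<forall>\<X>. \<X> \<subseteq> J \<and> |\<X>| <o r \<longrightarrow> \<Union>\<X> \<in> J"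
  unfolding is_ideal_def by (elim conjE) assumption

lemma ideal_D5: "is_ideal r J \<Longrightarrow> \<forall>\<alpha>\<in>Field r. {\<alpha>} \<in> J"
  unfolding is_ideal_def by (elim conjE) assumption

lemma ideal_sub: "is_ideal r J \<Longrightarrow> X \<in> J \<Longrightarrow> Y \<subseteq> X \<Longrightarrow> Y \<in> J"
  using ideal_D2 by blast

lemma ideal_Un: "is_ideal r J \<Longrightarrow> X \<in> J \<Longrightarrow> Y \<in> J \<Longrightarrow> X \<union> Y \<in> J"
  using ideal_D3 by blast

lemma ideal_UN:
  assumes "is_ideal r J" "\<forall>i\<in>S. F i \<in> J" "|S| <o r"
  shows "(\<Union>i\<in>S. F i) \<in> J"
proof -
  have "|F ` S| <o r" by (rule ordLeq_ordLess_trans[OF card_of_image assms(3)])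
  moreover have "F ` S \<subseteq> J" using assms(2) by blast
  ultimately show ?thesis using ideal_D4[OF assms(1)] by blast
qed

lemma ctbl_less:
  assumes "Card_order r" "uncountable (Field r)"
  shows "|range (B::nat \<Rightarrow> 'b)| <o r"
proof (rule ccontr)
  assume nl: "\<not> |range B| <o r"
  have WO: "Well_order r" using assms(1) by (simp add: card_order_on_def)
  have "|range B| <o r \<or> r \<le>o |range B|"
    by (rule ordLess_or_ordLeq[OF card_of_Well_order WO])
  with nl have "r \<le>o |range B|" by blast
  hence "|Field r| \<le>o |range B|"
    by (rule ordIso_ordLeq_trans[OF card_of_Field_ordIso[OF assms(1)]])
  then obtain f where f: "inj_on f (Field r)" "f ` Field r \<subseteq> range B"
    using card_of_ordLeq[of "Field r" "range B"] by blast
  have "countable (range B)" by simp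
  hence "countable (f ` Field r)" using countable_subset[OF f(2)] by blast
  hence "countable (Field r)" using countable_image_inj_on[OF _ f(1)] by blast
  thus False using assms(2) by blast
qed

lemma normal_pleasant: "normal_ideal r J \<Longrightarrow> is_ideal r J \<Longrightarrow> pleasant_ideal r J"
  unfolding pleasant_ideal_def normal_ideal_def
proof (intro allI impI)
  fix A X assume "\<forall>X. (\<forall>\<alpha>\<in>Field r. X \<alpha> \<in> J) \<longrightarrow> diag_union r (Field r) X \<in> J"
    "is_ideal r J" "A \<in> J \<and> (\<forall>\<alpha>\<in>Field r. X \<alpha> \<in> J)"
  moreover have "diag_union r A X \<subseteq> diag_union r (Field r) X"
    unfolding diag_union_def strict_less_def by (auto intro: FieldI1)
  ultimately show "diag_union r A X \<in> J" using ideal_sub by blast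
qed

theorem corollary2p3:
  fixes r :: "'a rel" and I :: "'a set set"
  assumes "Card_order r"
    and "regularCard r"
    and "uncountable (Field r)"
    and "is_ideal r I"
  shows "subpleasant r I \<longleftrightarrow> subnormal r I"
proof
  assume "subnormal r I"
  thus "subpleasant r I" unfolding subnormal_def subpleasant_def
    using normal_pleasant by blast
next
  assume "subpleasant r I"
  then obtain J where J: "is_ideal r J" "proper_ideal r J" "pleasant_ideal r J" "I \<subseteq> J"
    unfolding subpleasant_def by blast
  have WO: "Well_order r" using assms(1) by (simp add: card_order_on_def)
  hence wo: "wo_rel r" by (simp add: wo_rel_def)
  have tot: "\<forall>a\<in>Field r. \<forall>b\<in>Field r. (a,b)\<in>r \<or> (b,a)\<in>r" using wo_rel.TOTALS[OF wo] .
  have wf: "wf (r - Id)" using WO unfolding well_order_on_def by blast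
  define N where "N = {Y. Y \<subseteq> Field r \<and> (\<exists>X Z. (\<forall>\<alpha>\<in>Field r. X \<alpha> \<in> J) \<and> Z \<in> J
       \<and> Y \<subseteq> diag_union r (Field r) X \<union> Z)}"
  have Nintro: "Y \<in> N" if "Y \<subseteq> Field r" "\<forall>\<alpha>\<in>Field r. X \<alpha> \<in> J" "Z \<in> J"
    "Y \<subseteq> diag_union r (Field r) X \<union> Z" for Y X Z
    using that unfolding N_def by blast
  have ne: "Field r \<noteq> {}" using assms(3) by auto
  then obtain a0 where a0: "a0 \<in> Field r" by blast
  have "{a0} \<in> J" using ideal_D5[OF J(1)] a0 by blast
  hence empJ: "{} \<in> J" using ideal_sub[OF J(1)] by blast
  have JN: "J \<subseteq> N"
  proof
    fix Y assume "Y \<in> J"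
    moreover have "Y \<subseteq> Field r" using ideal_D1[OF J(1)] \<open>Y \<in> J\<close> by blast
    moreover have "Y \<subseteq> diag_union r (Field r) (\<lambda>_. {}) \<union> Y" by blast
    moreover have "\<forall>\<alpha>\<in>Field r. (\<lambda>_. {}) \<alpha> \<in> J" using empJ by simp
    ultimately show "Y \<in> N" using Nintro[of Y "\<lambda>_. {}" Y] by simp
  qed
  have idN: "is_ideal r N"
    unfolding is_ideal_def
  proof (intro conjI ballI allI impI)
    show "N \<subseteq> Pow (Field r)" unfolding N_def by blast
  next
    fix X Y assume "X \<in> N" "Y \<subseteq> X"
    thus "Y \<in> N" unfolding N_def by blast
  next
    fix Y1 Y2 assume "Y1 \<in> N" "Y2 \<in> N"
    then obtain X1 Z1 X2 Z2 where h: "Y1 \<subseteq> Field r" "\<forall>\<alpha>\<in>Field r. X1 \<alpha> \<in> J" "Z1 \<in> J"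
       "Y1 \<subseteq> diag_union r (Field r) X1 \<union> Z1"
       "Y2 \<subseteq> Field r" "\<forall>\<alpha>\<in>Field r. X2 \<alpha> \<in> J" "Z2 \<in> J"
       "Y2 \<subseteq> diag_union r (Field r) X2 \<union> Z2" unfolding N_def by blast
    have "Y1 \<union> Y2 \<subseteq> diag_union r (Field r) (\<lambda>\<alpha>. X1 \<alpha> \<union> X2 \<alpha>) \<union> (Z1 \<union> Z2)"
      using h(4,8) unfolding diag_union_def by blast
    moreover have "\<forall>\<alpha>\<in>Field r. X1 \<alpha> \<union> X2 \<alpha> \<in> J" using h(2,6) ideal_Un[OF J(1)] by blast
    moreover have "Z1 \<union> Z2 \<in> J" using h(3,7) ideal_Un[OF J(1)] by blast
    moreover have "Y1 \<union> Y2 \<subseteq> Field r" using h(1,5) by blast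
    ultimately show "Y1 \<union> Y2 \<in> N" using Nintro[of "Y1 \<union> Y2" "\<lambda>\<alpha>. X1 \<alpha> \<union> X2 \<alpha>" "Z1 \<union> Z2"] by blast
  next
    fix XX assume h: "XX \<subseteq> N \<and> |XX| <o r"
    hence ex: "\<forall>Y\<in>XX. \<exists>X Z. (\<forall>\<alpha>\<in>Field r. X \<alpha> \<in> J) \<and> Z \<in> J
       \<and> Y \<subseteq> diag_union r (Field r) X \<union> Z" unfolding N_def by blast
    obtain Xf Zf where c: "\<forall>Y\<in>XX. (\<forall>\<alpha>\<in>Field r. Xf Y \<alpha> \<in> J) \<and> Zf Y \<in> J
       \<and> Y \<subseteq> diag_union r (Field r) (Xf Y) \<union> Zf Y" using choice2[OF ex] by blast
    have f1: "\<forall>\<alpha>\<in>Field r. (\<Union>Y\<in>XX. Xf Y \<alpha>) \<in> J"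
    proof
      fix \<alpha> assume "\<alpha> \<in> Field r"
      hence "\<forall>Y\<in>XX. Xf Y \<alpha> \<in> J" using c by blast
      thus "(\<Union>Y\<in>XX. Xf Y \<alpha>) \<in> J" using ideal_UN[OF J(1), of XX "\<lambda>Y. Xf Y \<alpha>"] h by blast
    qed
    have "\<forall>Y\<in>XX. Zf Y \<in> J" using c by blast
    hence f2: "(\<Union>Y\<in>XX. Zf Y) \<in> J" using ideal_UN[OF J(1), of XX Zf] h by blast
    have f3: "\<Union>XX \<subseteq> diag_union r (Field r) (\<lambda>\<alpha>. \<Union>Y\<in>XX. Xf Y \<alpha>) \<union> (\<Union>Y\<in>XX. Zf Y)"
    proof
      fix \<xi> assume "\<xi> \<in> \<Union>XX"
      then obtain Y where Y: "Y \<in> XX" "\<xi> \<in> Y" by blast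
      hence "\<xi> \<in> diag_union r (Field r) (Xf Y) \<union> Zf Y" using c by blast
      thus "\<xi> \<in> diag_union r (Field r) (\<lambda>\<alpha>. \<Union>Y\<in>XX. Xf Y \<alpha>) \<union> (\<Union>Y\<in>XX. Zf Y)"
        using Y(1) unfolding diag_union_def by blast
    qed
    have f4: "\<Union>XX \<subseteq> Field r" using h unfolding N_def by blast
    show "\<Union>XX \<in> N" using Nintro[of "\<Union>XX" "\<lambda>\<alpha>. \<Union>Y\<in>XX. Xf Y \<alpha>" "\<Union>Y\<in>XX. Zf Y"] f1 f2 f3 f4 by blast
  next
    fix \<alpha> assume "\<alpha> \<in> Field r"
    hence "{\<alpha>} \<in> J" using ideal_D5[OF J(1)] by blast
    thus "{\<alpha>} \<in> N" using JN by blast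
  qed
  have nN: "normal_ideal r N"
    unfolding normal_ideal_def
  proof (intro allI impI)
    fix Y assume "\<forall>\<alpha>\<in>Field r. Y \<alpha> \<in> N"
    hence ex: "\<forall>\<alpha>\<in>Field r. \<exists>X Z. (\<forall>\<beta>\<in>Field r. X \<beta> \<in> J) \<and> Z \<in> J
       \<and> Y \<alpha> \<subseteq> diag_union r (Field r) X \<union> Z" unfolding N_def by blast
    obtain Xf Zf where c: "\<forall>\<alpha>\<in>Field r. (\<forall>\<beta>\<in>Field r. Xf \<alpha> \<beta> \<in> J) \<and> Zf \<alpha> \<in> J
       \<and> Y \<alpha> \<subseteq> diag_union r (Field r) (Xf \<alpha>) \<union> Zf \<alpha>" using choice2[OF ex] by blast
    define V where "V \<gamma> \<alpha> = (\<Union>\<beta>\<in>underS r \<gamma>. Xf \<alpha> \<beta>) \<union> Xf \<alpha> \<gamma>" for \<gamma> \<alpha>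
    define W where "W \<gamma> = (\<Union>\<alpha>\<in>underS r \<gamma>. V \<gamma> \<alpha>) \<union> V \<gamma> \<gamma> \<union> Zf \<gamma>" for \<gamma>
    have uF: "underS r \<gamma> \<subseteq> Field r" for \<gamma> unfolding underS_def by (auto intro: FieldI1)
    have VJ: "V \<gamma> \<alpha> \<in> J" if "\<gamma> \<in> Field r" "\<alpha> \<in> Field r" for \<gamma> \<alpha>
    proof -
      have c1: "\<forall>\<beta>\<in>Field r. Xf \<alpha> \<beta> \<in> J" using c that(2) by blast
      hence "\<forall>\<beta>\<in>underS r \<gamma>. Xf \<alpha> \<beta> \<in> J" using uF by blast
      hence "(\<Union>\<beta>\<in>underS r \<gamma>. Xf \<alpha> \<beta>) \<in> J"
        by (rule ideal_UN[OF J(1) _ card_of_underS[OF assms(1) that(1)]])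
      moreover have "Xf \<alpha> \<gamma> \<in> J" using c1 that(1) by blast
      ultimately show ?thesis unfolding V_def by (rule ideal_Un[OF J(1)])
    qed
    have WJ: "\<forall>\<gamma>\<in>Field r. W \<gamma> \<in> J"
    proof
      fix \<gamma> assume g: "\<gamma> \<in> Field r"
      have "\<forall>\<alpha>\<in>underS r \<gamma>. V \<gamma> \<alpha> \<in> J" using VJ g uF by blast
      hence "(\<Union>\<alpha>\<in>underS r \<gamma>. V \<gamma> \<alpha>) \<in> J"
        by (rule ideal_UN[OF J(1) _ card_of_underS[OF assms(1) g]])
      moreover have "V \<gamma> \<gamma> \<in> J" using VJ g by blast
      moreover have "Zf \<gamma> \<in> J" using c g by blast
      ultimately show "W \<gamma> \<in> J" unfolding W_def by (intro ideal_Un[OF J(1)])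
    qed
    have "diag_union r (Field r) Y \<subseteq> diag_union r (Field r) W"
    proof
      fix \<xi> assume "\<xi> \<in> diag_union r (Field r) Y"
      then obtain \<alpha> where a: "\<xi> \<in> Field r" "strict_less r \<alpha> \<xi>" "\<alpha> \<in> Field r" "\<xi> \<in> Y \<alpha>"
        unfolding diag_union_def by blast
      hence "\<xi> \<in> diag_union r (Field r) (Xf \<alpha>) \<or> \<xi> \<in> Zf \<alpha>" using c by blast
      thus "\<xi> \<in> diag_union r (Field r) W"
      proof
        assume "\<xi> \<in> Zf \<alpha>"
        hence "\<xi> \<in> W \<alpha>" unfolding W_def by blast
        thus ?thesis using a unfolding diag_union_def by blast
      next
        assume "\<xi> \<in> diag_union r (Field r) (Xf \<alpha>)"
        then obtain \<beta> where b: "strict_less r \<beta> \<xi>" "\<beta> \<in> Field r" "\<xi> \<in> Xf \<alpha> \<beta>"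
          unfolding diag_union_def by blast
        from tot a(3) b(2) have "(\<alpha>,\<beta>)\<in>r \<or> (\<beta>,\<alpha>)\<in>r" by blast
        hence "\<exists>\<gamma>. (\<alpha> \<in> underS r \<gamma> \<or> \<alpha> = \<gamma>) \<and> (\<beta> \<in> underS r \<gamma> \<or> \<beta> = \<gamma>)
            \<and> (\<gamma> = \<alpha> \<or> \<gamma> = \<beta>)"
        proof
          assume "(\<alpha>,\<beta>)\<in>r"
          hence "\<alpha> \<in> underS r \<beta> \<or> \<alpha> = \<beta>" unfolding underS_def by simp
          thus ?thesis by (intro exI[of _ \<beta>]) simp
        next
          assume "(\<beta>,\<alpha>)\<in>r"
          hence "\<beta> \<in> underS r \<alpha> \<or> \<beta> = \<alpha>" unfolding underS_def by simp
          thus ?thesis by (intro exI[of _ \<alpha>]) simp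
        qed
        then obtain \<gamma> where g: "\<alpha> \<in> underS r \<gamma> \<or> \<alpha> = \<gamma>" "\<beta> \<in> underS r \<gamma> \<or> \<beta> = \<gamma>"
            "\<gamma> = \<alpha> \<or> \<gamma> = \<beta>" by blast
        have "\<xi> \<in> V \<gamma> \<alpha>" using b(3) g(2) unfolding V_def by blast
        hence "\<xi> \<in> W \<gamma>" using g(1) unfolding W_def by blast
        moreover have "strict_less r \<gamma> \<xi>" using g(3) a(2) b(1) by blast
        moreover have "\<gamma> \<in> Field r" using g(3) a(3) b(2) by blast
        ultimately show ?thesis using a(1) unfolding diag_union_def by blast
      qed
    qed
    moreover have "diag_union r (Field r) Y \<subseteq> Field r" unfolding diag_union_def by blast
    ultimately show "diag_union r (Field r) Y \<in> N"
      using WJ empJ Nintro[of "diag_union r (Field r) Y" W "{}"] by blast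
  qed
  have pN: "proper_ideal r N"
    unfolding proper_ideal_def
  proof
    assume "Field r \<in> N"
    then obtain X Z where h: "\<forall>\<alpha>\<in>Field r. X \<alpha> \<in> J" "Z \<in> J"
       "Field r \<subseteq> diag_union r (Field r) X \<union> Z" unfolding N_def by blast
    define B where "B = rec_nat Z (\<lambda>_ A. A \<union> diag_union r A X)"
    have B0: "B 0 = Z" and BS: "B (Suc n) = B n \<union> diag_union r (B n) X" for n
      unfolding B_def by simp_all
    have BJ: "B n \<in> J" for n
    proof (induction n)
      case 0 thus ?case using B0 h by simp
    next
      case (Suc n)
      hence "diag_union r (B n) X \<in> J" using J(3) h(1) unfolding pleasant_ideal_def by simp
      thus ?case using Suc BS ideal_Un[OF J(1)] by simp
    qed
    have "\<forall>\<xi>. \<xi> \<in> Field r \<longrightarrow> (\<exists>n. \<xi> \<in> B n)"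
    proof (rule allI, induct_tac \<xi> rule: wf_induct_rule[OF wf])
      fix \<xi> assume IH: "\<And>y. (y, \<xi>) \<in> r - Id \<Longrightarrow> y \<in> Field r \<longrightarrow> (\<exists>n. y \<in> B n)"
      show "\<xi> \<in> Field r \<longrightarrow> (\<exists>n. \<xi> \<in> B n)"
      proof
        assume x: "\<xi> \<in> Field r"
        show "\<exists>n. \<xi> \<in> B n"
        proof (cases "\<xi> \<in> Z")
          case True thus ?thesis using B0 by blast
        next
          case False
          then obtain \<alpha> where a: "strict_less r \<alpha> \<xi>" "\<xi> \<in> X \<alpha>"
            using h(3) x unfolding diag_union_def by blast
          hence "(\<alpha>, \<xi>) \<in> r - Id" "\<alpha> \<in> Field r" unfolding strict_less_def
            by (auto intro: FieldI1)
          then obtain n where "\<alpha> \<in> B n" using IH by blast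
          hence "\<xi> \<in> diag_union r (B n) X" using a x unfolding diag_union_def by blast
          thus ?thesis using BS by blast
        qed
      qed
    qed
    hence "Field r \<subseteq> \<Union>(range B)" by blast
    moreover have "\<Union>(range B) \<in> J"
    proof -
      have U: "\<forall>\<X>. \<X> \<subseteq> J \<and> |\<X>| <o r \<longrightarrow> \<Union>\<X> \<in> J"
        using ideal_D4[OF J(1)] .
      have "range B \<subseteq> J" using BJ by blast
      thus ?thesis using U ctbl_less[OF assms(1,3), of B] by blast
    qed
    ultimately have "Field r \<in> J" using ideal_sub[OF J(1)] by blast
    thus False using J(2) unfolding proper_ideal_def by blast
  qed
  have IN: "I \<subseteq> N" using J(4) JN by (rule order_trans)
  show "subnormal r I" unfolding subnormal_def
    by (rule exI[of _ N]) (intro conjI idN pN nN IN)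
qed

end
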